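(* Let $\mathfrak g=\mathfrak g(V,\omega,D)$ be a generalized oscillator algebra and let $\lambda=(z^*,\alpha,t^* )\in\mathfrak g'$ be such that the coadjoint orbit $\mathcal O_\lambda$ is semi-equicontinuous. Suppose there exists $(z,x,t)$ in the interior $B(\mathcal O_\lambda)^0$ of $B(\mathcal O_\lambda)$ with $z^*t>0$. Then: (i) the symmetric bilinear form $Q:V\times V\to\mathbb R$, $Q(v,w):=\omega(Dv,w)$, is positive definite; (ii) $D^*\alpha=\alpha\circ D$ and all linear forms $i_x\omega=\omega(x,\cdot)$, $x\in V$, are $Q$-continuous, and $x\mapsto\|i_x\omega\|_Q$ is bounded on some $0$-neighborhood in $V$.
   Context: $(V,\omega)$ is a real locally convex space with a continuous non-degenerate alternating bilinear form $\omega$; $\gamma:\mathbb R\to\mathrm{Sp}(V,\omega)$ is a one-parameter group defining a smooth action of $\mathbb R$ on $V$, with generator $D=\gamma'(0)$. The generalized oscillator group $G=G(V,\omega,\gamma)=\mathbb R\times V\times\mathbb R$ has multiplication $(z,v,t)(z',v',t')=(z+z'+\frac12\omega(v,\gamma(t)v'),v+\gamma(t)v',t+t')$, and its Lie algebra $\mathfrak g(V,\omega,D)=\mathbb R\times V\times\mathbb R$ has bracket $[(z,v,t),(z',v',t')]=(\omega(v,v'),tDv'-t'Dv,0)$. Elements of $\mathfrak g'$ are written $\lambda=(z^*,\alpha,t^* )$ with $z^*,t^*\in\mathbb R$, $\alpha\in V'$, meaning $\lambda(z,x,t)=z^*z+\alpha(x)+t^*t$. Coadjoint orbits are $\mathcal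 O_\lambda=\mathrm{Ad}^*(G)\lambda$, $\mathrm{Ad}^*(g)\lambda=\lambda\circ\mathrm{Ad}(g)^{-1}$. For $E\subseteq\mathfrak g'$, $s_E(y)=\sup\langle E,-y\rangle$; $E$ is semi-equicontinuous if $s_E$ is bounded on a neighborhood of some point; $B(E)=\{y\in\mathfrak g:\inf\langle E,y\rangle>-\infty\}$. A linear form $\beta$ on $V$ is $Q$-continuous if $\|\beta\|_Q:=\sup\{\beta(v):Q(v,v)\le1\}<\infty$. *)

theory Defs
  imports "HOL-Analysis.Analysis"
begin

definition locally_convex_space :: "('v::{real_vector,topological_space}) itself \<Rightarrow> bool" where
  "locally_convex_space _ \<longleftrightarrow>
     continuous_on UNIV (\<lambda>p::'v \<times> 'v. fst p + snd p) \<and>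
     continuous_on UNIV (\<lambda>p::real \<times> 'v. fst p *\<^sub>R snd p) \<and>
     (\<forall>U::'v set. open U \<and> 0 \<in> U \<longrightarrow> (\<exists>W. open W \<and> 0 \<in> W \<and> convex W \<and> W \<subseteq> U))"

definition symplectic_form :: "('v::{real_vector,topological_space} \<Rightarrow> 'v \<Rightarrow> real) \<Rightarrow> bool" where
  "symplectic_form \<omega> \<longleftrightarrow> bilinear \<omega> \<and> (\<forall>v. \<omega> v v = 0) \<and>
     continuous_on UNIV (\<lambda>p. \<omega> (fst p) (snd p)) \<and>
     (\<forall>v. (\<forall>w. \<omega> v w = 0) \<longrightarrow> v = 0)"

definition Sp :: "('v::{real_vector,topological_space} \<Rightarrow> 'v \<Rightarrow> real) \<Rightarrow> ('v \<Rightarrow> 'v) set" where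
  "Sp \<omega> = {A. linear A \<and> bij A \<and> continuous_on UNIV A \<and> continuous_on UNIV (inv A) \<and>
              (\<forall>v w. \<omega> (A v) (A w) = \<omega> v w)}"

text \<open>Iterated directional derivatives: ddiff f k x h = d^k f(x)(h 0, ..., h (k-1)).\<close>
fun ddiff :: "('e::{real_vector,topological_space} \<Rightarrow> 'f::{real_vector,topological_space})
              \<Rightarrow> nat \<Rightarrow> 'e \<Rightarrow> (nat \<Rightarrow> 'e) \<Rightarrow> 'f" where
  "ddiff f 0 x h = f x"
| "ddiff f (Suc k) x h =
     (THE y. ((\<lambda>s. (1 / s) *\<^sub>R (ddiff f k (x + s *\<^sub>R h k) h - ddiff f k x h)) \<longlongrightarrow> y) (at 0))"

text \<open>f is smooth (C^infinity in the sense of Bastiani / Michal) on the whole space: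
  all iterated directional derivatives exist and are jointly continuous.\<close>
definition smooth_map :: "('e::{real_vector,topological_space} \<Rightarrow> 'f::{real_vector,topological_space}) \<Rightarrow> bool" where
  "smooth_map f \<longleftrightarrow> (\<forall>k.
     (\<forall>x h. ((\<lambda>s. (1 / s) *\<^sub>R (ddiff f k (x + s *\<^sub>R h k) h - ddiff f k x h)) \<longlongrightarrow> ddiff f (Suc k) x h) (at 0)) \<and>
     continuous_on UNIV (\<lambda>p :: 'e \<times> (nat \<Rightarrow> 'e). ddiff f k (fst p) (snd p)))"

definition smooth_sp_action :: "('v::{real_vector,topological_space} \<Rightarrow> 'v \<Rightarrow> real) \<Rightarrow> (real \<Rightarrow> 'v \<Rightarrow> 'v) \<Rightarrow> bool" where
  "smooth_sp_action \<omega> \<gamma> \<longleftrightarrow> (\<forall>t. \<gamma> t \<in> Sp \<omega>) \<and> \<gamma> 0 = id \<and>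
     (\<forall>s t. \<gamma> (s + t) = \<gamma> s \<circ> \<gamma> t) \<and> smooth_map (\<lambda>p :: real \<times> 'v. \<gamma> (fst p) (snd p))"

definition generator :: "(real \<Rightarrow> 'v \<Rightarrow> 'v) \<Rightarrow> 'v::{real_vector,topological_space} \<Rightarrow> 'v" where
  "generator \<gamma> v = (THE w. ((\<lambda>s. (1 / s) *\<^sub>R (\<gamma> s v - v)) \<longlongrightarrow> w) (at 0))"

definition osc_mult :: "('v::real_vector \<Rightarrow> 'v \<Rightarrow> real) \<Rightarrow> (real \<Rightarrow> 'v \<Rightarrow> 'v)
    \<Rightarrow> real \<times> 'v \<times> real \<Rightarrow> real \<times> 'v \<times> real \<Rightarrow> real \<times> 'v \<times> real" where
  "osc_mult \<omega> \<gamma> g g' = (case g of (z, v, t) \<Rightarrow> case g' of (z', v', t') \<Rightarrow>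
      (z + z' + (1/2) * \<omega> v (\<gamma> t v'), v + \<gamma> t v', t + t'))"

definition osc_inv :: "('v::real_vector \<Rightarrow> 'v \<Rightarrow> real) \<Rightarrow> (real \<Rightarrow> 'v \<Rightarrow> 'v)
    \<Rightarrow> real \<times> 'v \<times> real \<Rightarrow> real \<times> 'v \<times> real" where
  "osc_inv \<omega> \<gamma> g = (THE h. osc_mult \<omega> \<gamma> g h = (0, 0, 0))"

definition osc_conj :: "('v::real_vector \<Rightarrow> 'v \<Rightarrow> real) \<Rightarrow> (real \<Rightarrow> 'v \<Rightarrow> 'v)
    \<Rightarrow> real \<times> 'v \<times> real \<Rightarrow> real \<times> 'v \<times> real \<Rightarrow> real \<times> 'v \<times> real" where
  "osc_conj \<omega> \<gamma> g h = osc_mult \<omega> \<gamma> (osc_mult \<omega> \<gamma> g h) (osc_inv \<omega> \<gamma> g)"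

text \<open>Adjoint action: Ad(g) = d(conj_g)(1), the Lie algebra being identified with
  R x V x R via the global coordinates (identity = (0,0,0)).\<close>
definition osc_Ad :: "('v::{real_vector,topological_space} \<Rightarrow> 'v \<Rightarrow> real) \<Rightarrow> (real \<Rightarrow> 'v \<Rightarrow> 'v)
    \<Rightarrow> real \<times> 'v \<times> real \<Rightarrow> real \<times> 'v \<times> real \<Rightarrow> real \<times> 'v \<times> real" where
  "osc_Ad \<omega> \<gamma> g y = (THE w. ((\<lambda>s. (1 / s) *\<^sub>R
       (osc_conj \<omega> \<gamma> g (s *\<^sub>R y) - osc_conj \<omega> \<gamma> g (0, 0, 0))) \<longlongrightarrow> w) (at 0))"

definition lform :: "real \<Rightarrow> ('v \<Rightarrow> real) \<Rightarrow> real \<Rightarrow> real \<times> 'v \<times> real \<Rightarrow> real" where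
  "lform zs \<alpha> ts y = (case y of (z, x, t) \<Rightarrow> zs * z + \<alpha> x + ts * t)"

definition coadjoint_orbit :: "('v::{real_vector,topological_space} \<Rightarrow> 'v \<Rightarrow> real) \<Rightarrow> (real \<Rightarrow> 'v \<Rightarrow> 'v)
    \<Rightarrow> (real \<times> 'v \<times> real \<Rightarrow> real) \<Rightarrow> (real \<times> 'v \<times> real \<Rightarrow> real) set" where
  "coadjoint_orbit \<omega> \<gamma> l = {l \<circ> inv (osc_Ad \<omega> \<gamma> g) | g. True}"

definition support_fun :: "('a \<Rightarrow> real) set \<Rightarrow> 'a::uminus \<Rightarrow> ereal" where
  "support_fun E y = (SUP \<mu>\<in>E. ereal (\<mu> (- y)))"

definition semi_equicontinuous :: "('a::{uminus,topological_space} \<Rightarrow> real) set \<Rightarrow> bool" where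
  "semi_equicontinuous E \<longleftrightarrow>
     (\<exists>p U C. open U \<and> p \<in> U \<and> (\<forall>y\<in>U. \<bar>support_fun E y\<bar> \<le> ereal C))"

definition Bset :: "('a \<Rightarrow> real) set \<Rightarrow> 'a set" where
  "Bset E = {y. (INF \<mu>\<in>E. ereal (\<mu> y)) > -\<infinity>}"

definition Q_norm :: "('v \<Rightarrow> 'v \<Rightarrow> real) \<Rightarrow> ('v \<Rightarrow> real) \<Rightarrow> ereal" where
  "Q_norm Q \<beta> = (SUP v\<in>{v. Q v v \<le> 1}. ereal (\<beta> v))"

definition Q_continuous :: "('v \<Rightarrow> 'v \<Rightarrow> real) \<Rightarrow> ('v \<Rightarrow> real) \<Rightarrow> bool" where
  "Q_continuous Q \<beta> \<longleftrightarrow> Q_norm Q \<beta> < \<infinity>"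

end

theory Submission
  imports Defs
begin

lemma quadE: fixes A B E :: real assumes h: "\<And>c. 0 \<le> A + B*c + E*c^2" shows "E \<ge> 0"
proof (rule ccontr)
  assume "\<not> E \<ge> 0" hence E: "E < 0" by simp
  define c where "c = 1 + (\<bar>A\<bar> + \<bar>B\<bar>) / (-E)"
  have c1: "c \<ge> 1" unfolding c_def using E by (simp add: divide_nonneg_neg)
  have "c * (-E) = -E + \<bar>A\<bar> + \<bar>B\<bar>" unfolding c_def using E by (simp add: field_simps)
  hence e2: "E*c = E - \<bar>A\<bar> - \<bar>B\<bar>" by (simp add: algebra_simps)
  have "E*c^2 = c*(E*c)" by (simp add: power2_eq_square)
  also have "\<dots> = c * (E - \<bar>A\<bar> - \<bar>B\<bar>)" using e2 by simp
  also have "\<dots> \<le> E - \<bar>A\<bar> - c * \<bar>B\<bar>"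
  proof -
    have "c*E \<le> 1*E" by (rule mult_right_mono_neg) (use c1 E in auto)
    moreover have "1*\<bar>A\<bar> \<le> c*\<bar>A\<bar>" by (rule mult_right_mono) (use c1 in auto)
    ultimately show ?thesis by (simp add: algebra_simps)
  qed
  finally have "A + B*c + E*c^2 \<le> A + B * c + E - \<bar>A\<bar> - c * \<bar>B\<bar>" by simp
  also have "\<dots> < 0"
  proof -
    have "c*B \<le> c*\<bar>B\<bar>" by (rule mult_left_mono) (use c1 in auto)
    thus ?thesis using E abs_ge_self[of A] by (simp add: mult.commute)
  qed
  finally show False using h[of c] by simp
qed
lemma quadB: fixes A B :: real assumes h: "\<And>c. 0 \<le> A + B*c" shows "B = 0"
proof (rule ccontr)
  assume B: "B \<noteq> 0"
  have "0 \<le> A + B * (-(\<bar>A\<bar>+1)/B)" by (rule h)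
  also have "\<dots> = A - \<bar>A\<bar> - 1" using B by (simp add: field_simps)
  finally show False by simp
qed

lemma ereal_le_abs: "(x::ereal) \<le> \<bar>x\<bar>" by (cases x) auto
lemma ex_ereal_le: "(x::ereal) > -\<infinity> \<Longrightarrow> \<exists>M. ereal M \<le> x" by (cases x) auto

lemma qn_bound:
  assumes "\<And>v. Q v v \<le> 1 \<Longrightarrow> \<beta> v \<le> B" "Q 0 0 \<le> 1" "\<beta> 0 = 0"
  shows "Q_continuous Q \<beta>" "\<bar>Q_norm Q \<beta>\<bar> \<le> ereal B"
proof -
  have 1: "Q_norm Q \<beta> \<le> ereal B" unfolding Q_norm_def using assms(1) by (auto intro!: SUP_least)
  have 0: "0 \<le> Q_norm Q \<beta>" unfolding Q_norm_def using assms(2,3) SUP_upper[of 0 "{v. Q v v \<le> 1}" "\<lambda>v. ereal (\<beta> v)"] by (simp add: zero_ereal_def)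
  show "Q_continuous Q \<beta>" unfolding Q_continuous_def using le_less_trans[OF 1, of \<infinity>] by simp
  show "\<bar>Q_norm Q \<beta>\<bar> \<le> ereal B" using 0 1 by (simp add: abs_ereal_ge0)
qed

locale osc =
  fixes \<omega> :: "'v::{real_vector,topological_space} \<Rightarrow> 'v \<Rightarrow> real" and \<gamma> :: "real \<Rightarrow> 'v \<Rightarrow> 'v"
  assumes lcs: "locally_convex_space TYPE('v)" and sf: "symplectic_form \<omega>"
    and act: "smooth_sp_action \<omega> \<gamma>"
begin

abbreviation D where "D \<equiv> generator \<gamma>"

lemma bil: "bilinear \<omega>" using sf by (simp add: symplectic_form_def)
lemma alt[simp]: "\<omega> v v = 0" using sf by (simp add: symplectic_form_def)
lemma nondeg: "(\<And>w. \<omega> v w = 0) \<Longrightarrow> v = 0" using sf by (simp add: symplectic_form_def)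
lemma anti: "\<omega> a b = - \<omega> b a"
proof -
  have "0 = \<omega> (a+b) (a+b)" by simp
  also have "\<dots> = \<omega> a a + \<omega> b a + (\<omega> a b + \<omega> b b)" unfolding bilinear_ladd[OF bil] bilinear_radd[OF bil] by (rule refl)
  finally show ?thesis using alt[of a] alt[of b] by linarith
qed

lemma contP: "continuous_on UNIV (\<lambda>p. \<omega> (fst p) (snd p))"
  using sf by (simp add: symplectic_form_def)

lemma contL: "continuous_on UNIV (\<lambda>v. \<omega> v w)"
proof -
  have "continuous_on UNIV ((\<lambda>p. \<omega> (fst p) (snd p)) \<circ> (\<lambda>v. (v,w)))"
    by (rule continuous_on_compose) (auto intro!: continuous_intros contP[THEN continuous_on_subset])
  thus ?thesis by (simp add: o_def)
qed

lemma contR: "continuous_on UNIV (\<lambda>w. \<omega> v w)"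
proof -
  have "continuous_on UNIV ((\<lambda>p. \<omega> (fst p) (snd p)) \<circ> (\<lambda>w. (v,w)))"
    by (rule continuous_on_compose) (auto intro!: continuous_intros contP[THEN continuous_on_subset])
  thus ?thesis by (simp add: o_def)
qed

lemma add_cont: "continuous_on UNIV (\<lambda>x::'v. a + x)"
proof -
  have c: "continuous_on UNIV (\<lambda>p::'v \<times> 'v. fst p + snd p)" using lcs by (simp add: locally_convex_space_def)
  have "continuous_on UNIV ((\<lambda>p::'v \<times> 'v. fst p + snd p) \<circ> (\<lambda>x. (a,x)))"
    by (rule continuous_on_compose) (auto intro!: continuous_intros c[THEN continuous_on_subset])
  thus ?thesis by (simp add: o_def)
qed

lemma scale_cont: "continuous_on UNIV (\<lambda>x::'v. c *\<^sub>R x)"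
proof -
  have c: "continuous_on UNIV (\<lambda>p::real \<times> 'v. fst p *\<^sub>R snd p)" using lcs by (simp add: locally_convex_space_def)
  have "continuous_on UNIV ((\<lambda>p::real \<times> 'v. fst p *\<^sub>R snd p) \<circ> (\<lambda>x. (c,x)))"
    by (rule continuous_on_compose) (auto intro!: continuous_intros c[THEN continuous_on_subset])
  thus ?thesis by (simp add: o_def)
qed

lemma scale_cont_r: "continuous_on UNIV (\<lambda>c::real. c *\<^sub>R (x::'v))"
proof -
  have c: "continuous_on UNIV (\<lambda>p::real \<times> 'v. fst p *\<^sub>R snd p)" using lcs by (simp add: locally_convex_space_def)
  have "continuous_on UNIV ((\<lambda>p::real \<times> 'v. fst p *\<^sub>R snd p) \<circ> (\<lambda>c. (c,x)))"
    by (rule continuous_on_compose) (auto intro!: continuous_intros c[THEN continuous_on_subset])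
  thus ?thesis by (simp add: o_def)
qed

lemma cont_tendsto: "continuous_on UNIV g \<Longrightarrow> (f \<longlongrightarrow> l) F \<Longrightarrow> ((\<lambda>x. g (f x)) \<longlongrightarrow> g l) F"
  by (rule continuous_on_tendsto_compose) auto

lemma lim_unique:
  fixes f :: "'b \<Rightarrow> 'v"
  assumes "F \<noteq> bot" "(f \<longlongrightarrow> a) F" "(f \<longlongrightarrow> b) F" shows "a = b"
proof -
  have "\<omega> (a - b) w = 0" for w
  proof -
    have "((\<lambda>x. \<omega> (f x) w) \<longlongrightarrow> \<omega> a w) F" "((\<lambda>x. \<omega> (f x) w) \<longlongrightarrow> \<omega> b w) F"
      using cont_tendsto[OF contL] assms by auto
    hence "\<omega> a w = \<omega> b w" using assms(1) tendsto_unique by blast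
    thus ?thesis using bil by (simp add: bilinear_lsub)
  qed
  thus ?thesis using nondeg by fastforce
qed

lemma gsp: "\<gamma> t \<in> Sp \<omega>" using act by (simp add: smooth_sp_action_def)
lemma lin_gamma: "linear (\<gamma> t)" using gsp by (simp add: Sp_def)
lemma gamma0[simp]: "\<gamma> 0 v = v" using act by (simp add: smooth_sp_action_def)
lemma gamma_comp: "\<gamma> s (\<gamma> t v) = \<gamma> (s+t) v" using act by (simp add: smooth_sp_action_def)
lemma gamma_sp: "\<omega> (\<gamma> t a) (\<gamma> t b) = \<omega> a b" using gsp by (simp add: Sp_def)
lemma gamma_neg: "\<gamma> t (- v) = - \<gamma> t v" using lin_gamma linear_neg by blast
lemma gamma_scale: "\<gamma> t (c *\<^sub>R v) = c *\<^sub>R \<gamma> t v" using lin_gamma linear_scale by blast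
lemma gamma_add: "\<gamma> t (a + b) = \<gamma> t a + \<gamma> t b" using lin_gamma linear_add by blast

lemma smooth: "smooth_map (\<lambda>p :: real \<times> 'v. \<gamma> (fst p) (snd p))" using act by (simp add: smooth_sp_action_def)

lemma D_lim: "((\<lambda>s. (1/s) *\<^sub>R (\<gamma> s v - v)) \<longlongrightarrow> D v) (at 0)"
proof -
  let ?f = "\<lambda>p :: real \<times> 'v. \<gamma> (fst p) (snd p)"
  let ?h = "\<lambda>_::nat. (1::real, 0::'v)"
  have "((\<lambda>s. (1 / s) *\<^sub>R (ddiff ?f 0 ((0,v) + s *\<^sub>R ?h 0) ?h - ddiff ?f 0 (0,v) ?h)) \<longlongrightarrow> ddiff ?f (Suc 0) (0,v) ?h) (at 0)"
    using smooth unfolding smooth_map_def by (elim allE[of _ 0] conjE allE[of _ "(0,v)"] allE[of _ ?h])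
  hence L: "((\<lambda>s. (1/s) *\<^sub>R (\<gamma> s v - v)) \<longlongrightarrow> ddiff ?f (Suc 0) (0,v) ?h) (at 0)" by simp
  have "D v = ddiff ?f (Suc 0) (0,v) ?h"
    unfolding generator_def
  proof (rule the_equality)
    fix w assume "((\<lambda>s. (1/s) *\<^sub>R (\<gamma> s v - v)) \<longlongrightarrow> w) (at 0)"
    from lim_unique[OF _ this L] show "w = ddiff ?f (Suc 0) (0,v) ?h" by simp
  qed (rule L)
  thus ?thesis using L by simp
qed

lemma D_lim_scaled: "((\<lambda>s. (1/s) *\<^sub>R (\<gamma> (s*t) v - v)) \<longlongrightarrow> t *\<^sub>R D v) (at 0)"
proof (cases "t = 0")
  case True thus ?thesis by simp
next
  case False
  have F: "filterlim (\<lambda>s::real. s*t) (at 0) (at 0)"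
  proof (rule filterlim_atI)
    show "((\<lambda>s::real. s*t) \<longlongrightarrow> 0) (at 0)"
      by (auto intro!: tendsto_eq_intros)
    show "\<forall>\<^sub>F s in at 0. s * t \<noteq> 0" using False by (simp add: eventually_at_filter)
  qed
  have "((\<lambda>s. (1/(s*t)) *\<^sub>R (\<gamma> (s*t) v - v)) \<longlongrightarrow> D v) (at 0)"
    using filterlim_compose[OF D_lim F] by simp
  from cont_tendsto[OF scale_cont[of t] this]
  have "((\<lambda>s. t *\<^sub>R ((1/(s*t)) *\<^sub>R (\<gamma> (s*t) v - v))) \<longlongrightarrow> t *\<^sub>R D v) (at 0)" .
  moreover have eq: "t *\<^sub>R ((1/(s*t)) *\<^sub>R x) = (1/s) *\<^sub>R x" for s and x :: 'v
  proof -
    have "t * (1/(s*t)) = 1/s" using False by (cases "s=0") simp_all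
    thus ?thesis by (metis scaleR_scaleR)
  qed
  ultimately show ?thesis by (simp only: eq)
qed

lemma omegaR_lim: "((\<lambda>s. (1/s) * (\<omega> y (\<gamma> (s*t) u) - \<omega> y u)) \<longlongrightarrow> t * \<omega> y (D u)) (at 0)"
  using cont_tendsto[OF contR[of y] D_lim_scaled[of t u]]
  by (simp add: bilinear_rmul[OF bil] bilinear_rsub[OF bil])

lemma omegaL_lim: "((\<lambda>s. (1/s) * (\<omega> (\<gamma> s v) w - \<omega> v w)) \<longlongrightarrow> \<omega> (D v) w) (at 0)"
  using cont_tendsto[OF contL[of w] D_lim[of v]]
  by (simp add: bilinear_lmul[OF bil] bilinear_lsub[OF bil])

lemma D_add: "D (a + b) = D a + D b"
proof -
  have "\<omega> (D (a+b)) w = \<omega> (D a + D b) w" for w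
  proof -
    have "((\<lambda>s. (1/s) * (\<omega> (\<gamma> s a) w - \<omega> a w) + (1/s) * (\<omega> (\<gamma> s b) w - \<omega> b w)) \<longlongrightarrow> \<omega> (D a) w + \<omega> (D b) w) (at 0)"
      by (intro tendsto_add omegaL_lim)
    moreover have "(1/s) * (\<omega> (\<gamma> s a) w - \<omega> a w) + (1/s) * (\<omega> (\<gamma> s b) w - \<omega> b w) = (1/s) * (\<omega> (\<gamma> s (a+b)) w - \<omega> (a+b) w)" for s
      by (simp add: gamma_add bilinear_ladd[OF bil] algebra_simps)
    ultimately have "((\<lambda>s. (1/s) * (\<omega> (\<gamma> s (a+b)) w - \<omega> (a+b) w)) \<longlongrightarrow> \<omega> (D a) w + \<omega> (D b) w) (at 0)" by simp
    then have "\<omega> (D (a+b)) w = \<omega> (D a) w + \<omega> (D b) w" by (rule tendsto_unique[OF trivial_limit_at omegaL_lim])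
    thus ?thesis by (simp add: bilinear_ladd[OF bil])
  qed
  hence "\<omega> (D (a+b) - (D a + D b)) w = 0" for w by (simp add: bilinear_lsub[OF bil])
  thus ?thesis using nondeg by fastforce
qed

lemma D_scale: "D (c *\<^sub>R a) = c *\<^sub>R D a"
proof -
  have "\<omega> (D (c *\<^sub>R a)) w = \<omega> (c *\<^sub>R D a) w" for w
  proof -
    have "((\<lambda>s. c * ((1/s) * (\<omega> (\<gamma> s a) w - \<omega> a w))) \<longlongrightarrow> c * \<omega> (D a) w) (at 0)"
      by (intro tendsto_mult tendsto_const omegaL_lim)
    moreover have "(\<lambda>s. c * ((1/s) * (\<omega> (\<gamma> s a) w - \<omega> a w))) = (\<lambda>s. (1/s) * (\<omega> (\<gamma> s (c *\<^sub>R a)) w - \<omega> (c *\<^sub>R a) w))"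
      by (rule ext) (simp add: gamma_scale bilinear_lmul[OF bil] algebra_simps)
    ultimately have "((\<lambda>s. (1/s) * (\<omega> (\<gamma> s (c *\<^sub>R a)) w - \<omega> (c *\<^sub>R a) w)) \<longlongrightarrow> c * \<omega> (D a) w) (at 0)" by simp
    then have "\<omega> (D (c *\<^sub>R a)) w = c * \<omega> (D a) w" by (rule tendsto_unique[OF trivial_limit_at omegaL_lim])
    thus ?thesis by (simp add: bilinear_lmul[OF bil])
  qed
  hence "\<omega> (D (c *\<^sub>R a) - c *\<^sub>R D a) w = 0" for w by (simp add: bilinear_lsub[OF bil])
  thus ?thesis using nondeg by fastforce
qed

lemma D_linear: "linear D" by (rule linearI) (simp_all add: D_add D_scale)

lemma D_neg: "D (- a) = - D a" using D_linear linear_neg by blast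

lemma D_sym: "\<omega> (D v) w = \<omega> (D w) v"
proof -
  have e: "\<omega> (\<gamma> s v) w = \<omega> v (\<gamma> (s * -1) w)" for s
  proof -
    have "\<omega> (\<gamma> s v) w = \<omega> (\<gamma> s v) (\<gamma> s (\<gamma> (s * -1) w))" by (simp add: gamma_comp)
    thus ?thesis by (simp add: gamma_sp)
  qed
  have "((\<lambda>s. (1/s) * (\<omega> v (\<gamma> (s * -1) w) - \<omega> v w)) \<longlongrightarrow> -1 * \<omega> v (D w)) (at 0)"
    by (rule omegaR_lim)
  hence "((\<lambda>s. (1/s) * (\<omega> (\<gamma> s v) w - \<omega> v w)) \<longlongrightarrow> -1 * \<omega> v (D w)) (at 0)"
    by (simp only: e)
  then have "\<omega> (D v) w = -1 * \<omega> v (D w)" by (rule tendsto_unique[OF trivial_limit_at omegaL_lim])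
  thus ?thesis using anti[of v "D w"] by simp
qed

definition A :: "'v \<Rightarrow> real \<times> 'v \<times> real \<Rightarrow> real \<times> 'v \<times> real" where
  "A u y = (case y of (z, x, t) \<Rightarrow> (z + \<omega> u x - t/2 * \<omega> u (D u), x - t *\<^sub>R D u, t))"

lemma osc_inv_u: "osc_inv \<omega> \<gamma> (0, u, 0) = (0, -u, 0)"
  unfolding osc_inv_def
proof (rule the_equality)
  show "osc_mult \<omega> \<gamma> (0, u, 0) (0, - u, 0) = (0, 0, 0)"
    by (simp add: osc_mult_def bilinear_rneg[OF bil])
  fix h assume h: "osc_mult \<omega> \<gamma> (0, u, 0) h = (0, 0, 0)"
  obtain a b c where hh: "h = (a,b,c)" by (cases h) auto
  from h have "c = 0" "b = -u" "a + 1/2 * \<omega> u b = 0"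
    by (auto simp: hh osc_mult_def add_eq_0_iff)
  thus "h = (0, -u, 0)" using hh by (simp add: bilinear_rneg[OF bil])
qed

lemma lim_unique3:
  fixes f :: "'b \<Rightarrow> real \<times> 'v \<times> real"
  assumes "F \<noteq> bot" "(f \<longlongrightarrow> a) F" "(f \<longlongrightarrow> b) F" shows "a = b"
proof -
  have 1: "fst a = fst b" using tendsto_fst[OF assms(2)] tendsto_fst[OF assms(3)] assms(1) tendsto_unique by blast
  have 3: "snd (snd a) = snd (snd b)" using tendsto_snd[OF tendsto_snd[OF assms(2)]] tendsto_snd[OF tendsto_snd[OF assms(3)]] assms(1) tendsto_unique by blast
  have 2: "fst (snd a) = fst (snd b)" using lim_unique[OF assms(1) tendsto_fst[OF tendsto_snd[OF assms(2)]] tendsto_fst[OF tendsto_snd[OF assms(3)]]] .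
  show ?thesis using 1 2 3 by (simp add: prod_eq_iff)
qed

lemma ev_nz: "\<forall>\<^sub>F s in at (0::real). s \<noteq> 0" by (simp add: eventually_at_filter)

lemma Ad_u: "osc_Ad \<omega> \<gamma> (0, u, 0) y = A u y"
proof -
  obtain z x t where y: "y = (z, x, t)" by (cases y) auto
  let ?g = "(0::real, u, 0::real)"
  have c0: "osc_conj \<omega> \<gamma> ?g (0,0,0) = (0,0,0)"
    by (simp add: osc_conj_def osc_inv_u osc_mult_def bilinear_rneg[OF bil] bilinear_rzero[OF bil])
  have cs: "osc_conj \<omega> \<gamma> ?g (s *\<^sub>R y) = (s*z + 1/2 * (s * \<omega> u x) + 1/2 * \<omega> (u + s *\<^sub>R x) (\<gamma> (s*t) (-u)), u + s *\<^sub>R x + \<gamma> (s*t) (-u), s*t)" for s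
    by (simp add: y osc_conj_def osc_inv_u osc_mult_def bilinear_rmul[OF bil])
  define c1 where "c1 s = (1/s) * (s*z + 1/2 * (s * \<omega> u x) + 1/2 * \<omega> (u + s *\<^sub>R x) (\<gamma> (s*t) (-u)))" for s
  define c2 where "c2 s = (1/s) *\<^sub>R (u + s *\<^sub>R x + \<gamma> (s*t) (-u))" for s
  have feq: "(1/s) *\<^sub>R (osc_conj \<omega> \<gamma> ?g (s *\<^sub>R y) - osc_conj \<omega> \<gamma> ?g (0,0,0)) = (c1 s, c2 s, (1/s)*(s*t))" for s
    unfolding cs c0 c1_def c2_def by simp
  define P where "P s = (1/s) * (\<omega> u (\<gamma> (s*t) u) - \<omega> u u)" for s
  define R where "R s = (1/s) * (\<omega> x (\<gamma> (s*t) u) - \<omega> x u)" for s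
  have P: "(P \<longlongrightarrow> t * \<omega> u (D u)) (at 0)" unfolding P_def by (rule omegaR_lim)
  have R: "(R \<longlongrightarrow> t * \<omega> x (D u)) (at 0)" unfolding R_def by (rule omegaR_lim)
  have "((\<lambda>s. z + 1/2 * \<omega> u x - 1/2 * P s - 1/2 * (\<omega> x u + s * R s)) \<longlongrightarrow>
          z + 1/2 * \<omega> u x - 1/2 * (t * \<omega> u (D u)) - 1/2 * (\<omega> x u + 0 * (t * \<omega> x (D u)))) (at 0)"
    by (intro tendsto_intros P R)
  note T1 = this
  have E1: "z + 1/2 * \<omega> u x - 1/2 * (t * \<omega> u (D u)) - 1/2 * (\<omega> x u + 0 * (t * \<omega> x (D u)))
      = z + \<omega> u x - t/2 * \<omega> u (D u)" using anti[of x u] by simp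
  have EV1: "\<forall>\<^sub>F s in at 0. z + 1/2 * \<omega> u x - 1/2 * P s - 1/2 * (\<omega> x u + s * R s) = c1 s"
    using ev_nz
  proof (rule eventually_mono)
    fix s :: real assume s: "s \<noteq> 0"
    show "z + 1/2 * \<omega> u x - 1/2 * P s - 1/2 * (\<omega> x u + s * R s) = c1 s"
      using s unfolding P_def R_def c1_def
      by (simp add: gamma_neg bilinear_ladd[OF bil] bilinear_lmul[OF bil] bilinear_rneg[OF bil] field_simps)
  qed
  have L1: "(c1 \<longlongrightarrow> z + \<omega> u x - t/2 * \<omega> u (D u)) (at 0)"
    using Lim_transform_eventually[OF T1 EV1] unfolding E1 .
  have "((\<lambda>s. x + (-1) *\<^sub>R ((1/s) *\<^sub>R (\<gamma> (s*t) u - u))) \<longlongrightarrow> x + (-1) *\<^sub>R (t *\<^sub>R D u)) (at 0)"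
    by (rule cont_tendsto[OF add_cont cont_tendsto[OF scale_cont D_lim_scaled]])
  moreover have "\<forall>\<^sub>F s in at 0. x + (-1) *\<^sub>R ((1/s) *\<^sub>R (\<gamma> (s*t) u - u)) = c2 s"
    using ev_nz
  proof (rule eventually_mono)
    fix s :: real assume s: "s \<noteq> 0"
    show "x + (-1) *\<^sub>R ((1/s) *\<^sub>R (\<gamma> (s*t) u - u)) = c2 s"
      using s unfolding c2_def by (simp add: gamma_neg algebra_simps)
  qed
  ultimately have L2: "(c2 \<longlongrightarrow> x - t *\<^sub>R D u) (at 0)"
    using Lim_transform_eventually by fastforce
  have L3: "((\<lambda>s. (1/s)*(s*t)) \<longlongrightarrow> t) (at 0)"
    by (rule Lim_transform_eventually[OF tendsto_const]) (rule eventually_mono[OF ev_nz], simp)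
  have L: "((\<lambda>s. (1/s) *\<^sub>R (osc_conj \<omega> \<gamma> ?g (s *\<^sub>R y) - osc_conj \<omega> \<gamma> ?g (0,0,0))) \<longlongrightarrow> A u y) (at 0)"
  proof -
    have fe: "(\<lambda>s. (1/s) *\<^sub>R (osc_conj \<omega> \<gamma> ?g (s *\<^sub>R y) - osc_conj \<omega> \<gamma> ?g (0,0,0))) = (\<lambda>s. (c1 s, c2 s, (1/s)*(s*t)))"
      by (rule ext) (rule feq)
    have Ay: "A u y = (z + \<omega> u x - t/2 * \<omega> u (D u), x - t *\<^sub>R D u, t)" by (simp add: A_def y)
    show ?thesis unfolding fe Ay by (intro tendsto_Pair L1 L2 L3)
  qed
  show ?thesis
    unfolding osc_Ad_def
  proof (rule the_equality)
    fix w assume "((\<lambda>s. (1/s) *\<^sub>R (osc_conj \<omega> \<gamma> ?g (s *\<^sub>R y) - osc_conj \<omega> \<gamma> ?g (0,0,0))) \<longlongrightarrow> w) (at 0)"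
    from lim_unique3[OF _ this L] show "w = A u y" by simp
  qed (rule L)
qed

lemma A_inv: "A (-u) (A u y) = y"
  by (cases y) (simp add: A_def D_neg bilinear_lneg[OF bil] bilinear_rneg[OF bil] bilinear_rsub[OF bil] bilinear_rmul[OF bil] algebra_simps)

lemma in_orbit: "l \<circ> A u \<in> coadjoint_orbit \<omega> \<gamma> l"
proof -
  have "inv (osc_Ad \<omega> \<gamma> (0, -u, 0)) = A u"
  proof -
    have e: "osc_Ad \<omega> \<gamma> (0, -u, 0) = A (-u)" by (rule ext) (rule Ad_u)
    show ?thesis unfolding e
      by (rule inv_unique_comp) (auto simp: fun_eq_iff A_inv intro: A_inv[of "-u", simplified])
  qed
  hence "l \<circ> A u = l \<circ> inv (osc_Ad \<omega> \<gamma> (0, -u, 0))" by simp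
  thus ?thesis unfolding coadjoint_orbit_def by blast
qed

lemma absorb: fixes x :: 'v assumes "open V" "0 \<in> V" shows "\<exists>c>0. c *\<^sub>R x \<in> V"
proof -
  have "open ((\<lambda>c. c *\<^sub>R x) -` V)" by (rule open_vimage[OF assms(1) scale_cont_r])
  moreover have "0 \<in> (\<lambda>c. c *\<^sub>R x) -` V" using assms(2) by simp
  ultimately obtain d where d: "d > 0" "ball 0 d \<subseteq> (\<lambda>c. c *\<^sub>R x) -` V" by (meson openE)
  have "d/2 \<in> ball 0 d" using d(1) by (simp add: dist_real_def)
  hence "d/2 \<in> (\<lambda>c. c *\<^sub>R x) -` V" using d(2) by blast
  thus ?thesis using d(1) by (intro exI[of _ "d/2"]) auto
qed

lemma mu_linear: assumes la: "linear \<alpha>" shows "linear (\<lambda>y. lform zs \<alpha> ts (A u y))"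
proof (rule linearI)
  fix y1 y2 :: "real \<times> 'v \<times> real" and c :: real
  obtain a1 b1 c1 where y1: "y1 = (a1,b1,c1)" by (cases y1) auto
  obtain a2 b2 c2 where y2: "y2 = (a2,b2,c2)" by (cases y2) auto
  show "lform zs \<alpha> ts (A u (y1 + y2)) = lform zs \<alpha> ts (A u y1) + lform zs \<alpha> ts (A u y2)"
    by (simp add: y1 y2 A_def lform_def linear_add[OF la] linear_diff[OF la] linear_scale[OF la]
        bilinear_radd[OF bil] algebra_simps)
  show "lform zs \<alpha> ts (A u (c *\<^sub>R y1)) = c *\<^sub>R lform zs \<alpha> ts (A u y1)"
    by (simp add: y1 A_def lform_def linear_add[OF la] linear_diff[OF la] linear_scale[OF la]
        bilinear_rmul[OF bil] algebra_simps)
qed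

lemma expand: assumes la: "linear \<alpha>"
  shows "lform zs \<alpha> ts (A (c *\<^sub>R v) (z0, x0 + w, t0)) = (zs*z0 + \<alpha> x0 + \<alpha> w + ts*t0) + c * (zs * \<omega> v (x0+w) - t0 * \<alpha> (D v)) + c^2 * (zs*t0/2 * \<omega> (D v) v)"
proof -
  have e: "\<omega> (c *\<^sub>R v) (D (c *\<^sub>R v)) = -(c^2 * \<omega> (D v) v)"
    using anti[of v "D v"] by (simp add: D_scale bilinear_lmul[OF bil] bilinear_rmul[OF bil] power2_eq_square)
  show ?thesis
    using anti[of v "D v"] by (simp add: A_def lform_def D_scale linear_add[OF la] bilinear_rmul[OF bil] linear_diff[OF la] linear_scale[OF la]
        bilinear_lmul[OF bil] algebra_simps power2_eq_square)
qed

lemma main: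
  assumes la: "linear \<alpha>" and ca: "continuous_on UNIV \<alpha>"
    and se: "semi_equicontinuous (coadjoint_orbit \<omega> \<gamma> (lform zs \<alpha> ts))"
    and ip: "(z0, x0, t0) \<in> interior (Bset (coadjoint_orbit \<omega> \<gamma> (lform zs \<alpha> ts)))"
    and pos: "zs * t0 > 0"
  shows "bilinear (\<lambda>v w. \<omega> (generator \<gamma> v) w)
         \<and> (\<forall>v w. \<omega> (generator \<gamma> v) w = \<omega> (generator \<gamma> w) v)
         \<and> (\<forall>v. v \<noteq> 0 \<longrightarrow> \<omega> (generator \<gamma> v) v > 0)
         \<and> Q_continuous (\<lambda>v w. \<omega> (generator \<gamma> v) w) (\<alpha> \<circ> generator \<gamma>)
         \<and> (\<forall>x. Q_continuous (\<lambda>v w. \<omega> (generator \<gamma> v) w) (\<omega> x))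
         \<and> (\<exists>U. open U \<and> 0 \<in> U \<and>
           (\<exists>C. \<forall>x\<in>U. \<bar>Q_norm (\<lambda>v w. \<omega> (generator \<gamma> v) w) (\<omega> x)\<bar> \<le> ereal C))"
proof -
  let ?O = "coadjoint_orbit \<omega> \<gamma> (lform zs \<alpha> ts)"
  define mu where "mu u y = lform zs \<alpha> ts (A u y)" for u y
  have muO: "(\<lambda>y. mu u y) \<in> ?O" for u using in_orbit[of "lform zs \<alpha> ts" u] by (simp add: mu_def o_def)
  have mul: "linear (mu u)" for u unfolding mu_def by (rule mu_linear[OF la])
  from se obtain p U C where U: "open U" "p \<in> U" and hC: "\<forall>y\<in>U. \<bar>support_fun ?O y\<bar> \<le> ereal C"
    unfolding semi_equicontinuous_def by blast
  have lowU: "mu u y \<ge> -C" if "y \<in> U" for u y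
  proof -
    have "ereal (mu u (-y)) \<le> support_fun ?O y"
      unfolding support_fun_def using SUP_upper[OF muO[of u], of "\<lambda>\<mu>. ereal (\<mu> (-y))"] by simp
    also have "\<dots> \<le> \<bar>support_fun ?O y\<bar>" by (rule ereal_le_abs)
    also have "\<dots> \<le> ereal C" using hC that by blast
    finally have "mu u (-y) \<le> C" by simp
    moreover have "mu u (-y) = - mu u y" using linear_neg[OF mul] by blast
    ultimately show ?thesis by simp
  qed
  define q where "q = (z0, x0, t0)"
  from ip obtain T where T: "open T" "q \<in> T" "T \<subseteq> Bset ?O" unfolding q_def by (meson interiorE)
  have contq: "continuous_on UNIV (\<lambda>e::real. q + e *\<^sub>R (q - p))"
  proof -
    obtain a b c where p: "p = (a,b,c)" by (cases p) auto
    have e: "(\<lambda>e::real. q + e *\<^sub>R (q - p)) = (\<lambda>e. (z0 + e * (z0 - a), x0 + e *\<^sub>R (x0 - b), t0 + e * (t0 - c)))"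
      by (rule ext) (simp add: q_def p)
    have cv: "continuous_on UNIV (\<lambda>e::real. x0 + e *\<^sub>R (x0 - b))"
      using continuous_on_compose[OF scale_cont_r continuous_on_subset[OF add_cont subset_UNIV]] by (simp add: o_def)
    show ?thesis unfolding e by (intro continuous_on_Pair cv continuous_intros)
  qed
  have "open ((\<lambda>e::real. q + e *\<^sub>R (q - p)) -` T)" by (rule open_vimage[OF T(1) contq])
  moreover have "0 \<in> (\<lambda>e::real. q + e *\<^sub>R (q - p)) -` T" using T(2) by simp
  ultimately obtain d where d: "d > 0" "ball 0 d \<subseteq> (\<lambda>e::real. q + e *\<^sub>R (q - p)) -` T" by (meson openE)
  define \<epsilon> where "\<epsilon> = d/2"
  have \<epsilon>: "\<epsilon> > 0" using d(1) by (simp add: \<epsilon>_def)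
  have "\<epsilon> \<in> ball 0 d" using d(1) by (simp add: \<epsilon>_def dist_real_def)
  hence rT: "q + \<epsilon> *\<^sub>R (q - p) \<in> T" using d(2) by blast
  define r where "r = q + \<epsilon> *\<^sub>R (q - p)"
  have "r \<in> Bset ?O" using rT T(3) unfolding r_def by blast
  hence "(INF \<mu>\<in>?O. ereal (\<mu> r)) > -\<infinity>" unfolding Bset_def by simp
  then obtain Mr where Mr: "ereal Mr \<le> (INF \<mu>\<in>?O. ereal (\<mu> r))" using ex_ereal_le by blast
  have lowr: "mu u r \<ge> Mr" for u
  proof -
    have "(INF \<mu>\<in>?O. ereal (\<mu> r)) \<le> ereal (mu u r)" using INF_lower[OF muO[of u], of "\<lambda>\<mu>. ereal (\<mu> r)"] by simp
    with Mr have "ereal Mr \<le> ereal (mu u r)" by (rule order.trans)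
    thus ?thesis by simp
  qed
  define k where "k = (1+\<epsilon>)/\<epsilon>"
  define V0 where "V0 = {w. p + k *\<^sub>R (0,w,0) \<in> U} \<inter> {w. \<bar>\<alpha> w\<bar> < 1}"
  have V0open: "open V0"
  proof -
    obtain a b c where p: "p = (a,b,c)" by (cases p) auto
    have e: "{w. p + k *\<^sub>R (0,w,0) \<in> U} = (\<lambda>w. (a, b + k *\<^sub>R w, c)) -` U" by (auto simp: p)
    have cv: "continuous_on UNIV (\<lambda>w. b + k *\<^sub>R w)"
      using continuous_on_compose[OF scale_cont continuous_on_subset[OF add_cont subset_UNIV]] by (simp add: o_def)
    have o1: "open {w. p + k *\<^sub>R (0,w,0) \<in> U}" unfolding e
      by (rule open_vimage[OF U(1)]) (intro continuous_on_Pair cv continuous_intros)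
    have e2: "{w. \<bar>\<alpha> w\<bar> < 1} = \<alpha> -` {-1<..<1}" by auto
    have o2: "open {w. \<bar>\<alpha> w\<bar> < 1}" unfolding e2 by (rule open_vimage[OF _ ca]) simp
    show ?thesis unfolding V0_def using o1 o2 by blast
  qed
  have V00: "0 \<in> V0" unfolding V0_def using U(2) linear_0[OF la] by (simp add: zero_prod_def[symmetric])
  define M where "M = (\<epsilon> * C - Mr) / (1+\<epsilon>)"
  have low: "mu u (z0, x0 + w, t0) \<ge> -M" if w: "w \<in> V0" for u w
  proof -
    define y' where "y' = p + k *\<^sub>R (0,w,0)"
    have y'U: "y' \<in> U" using w unfolding V0_def y'_def by blast
    have m1: "mu u (z0, x0 + w, t0) = mu u q + mu u (0,w,0)"
    proof -
      have "(z0, x0 + w, t0) = q + (0,w,0)" by (simp add: q_def)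
      thus ?thesis using linear_add[OF mul] by simp
    qed
    have mr: "mu u r = mu u q + \<epsilon> * (mu u q - mu u p)"
      unfolding r_def by (simp add: linear_add[OF mul] linear_scale[OF mul] linear_diff[OF mul])
    have my: "mu u y' = mu u p + k * mu u (0,w,0)"
      unfolding y'_def linear_add[OF mul] linear_scale[OF mul] by simp
    have eq: "mu u (z0, x0 + w, t0) = (mu u r + \<epsilon> * mu u y') / (1+\<epsilon>)"
    proof -
      have "mu u r + \<epsilon> * mu u y' = (1+\<epsilon>) * (mu u q + mu u (0,w,0))"
        unfolding mr my k_def using \<epsilon> by (simp add: field_simps)
      moreover have "1 + \<epsilon> \<noteq> 0" using \<epsilon> by simp
      ultimately show ?thesis unfolding m1 by simp
    qed
    have "mu u r + \<epsilon> * mu u y' \<ge> Mr + \<epsilon> * (-C)"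
      using lowr[of u] lowU[OF y'U, of u] \<epsilon> by (smt (verit) mult_left_mono)
    hence "(mu u r + \<epsilon> * mu u y') / (1+\<epsilon>) \<ge> (Mr + \<epsilon> * (-C)) / (1+\<epsilon>)"
      using \<epsilon> by (simp add: divide_right_mono)
    moreover have "-M = (Mr + \<epsilon> * (-C)) / (1+\<epsilon>)" unfolding M_def by (simp add: minus_divide_left algebra_simps)
    ultimately show ?thesis unfolding eq by simp
  qed
  define a where "a = zs * t0"
  define K where "K w = zs*z0 + \<alpha> x0 + \<alpha> w + ts*t0" for w
  define L where "L w v = zs * \<omega> v (x0+w) - t0 * \<alpha> (D v)" for w v
  have quad: "0 \<le> (K w + M) + L w v * c + (a/2 * \<omega> (D v) v) * c^2" if "w \<in> V0" for w v c
    using low[OF that, of "c *\<^sub>R v"] unfolding mu_def expand[OF la] K_def L_def a_def by (simp add: algebra_simps)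
  have Epos: "\<omega> (D v) v \<ge> 0" for v
  proof -
    have "a/2 * \<omega> (D v) v \<ge> 0" by (rule quadE[OF quad[OF V00]])
    thus ?thesis using pos unfolding a_def by (simp add: zero_le_mult_iff)
  qed
  have zs0: "zs \<noteq> 0" using pos by auto
  have t00: "t0 \<noteq> 0" using pos by auto
  have Ldiff: "L w v - L 0 v = zs * \<omega> v w" for w v
    unfolding L_def by (simp add: bilinear_radd[OF bil] algebra_simps)
  have strict: "\<omega> (D v) v > 0" if "v \<noteq> 0" for v
  proof (rule ccontr)
    assume "\<not> \<omega> (D v) v > 0"
    hence E0: "\<omega> (D v) v = 0" using Epos[of v] by simp
    have L0: "L w v = 0" if "w \<in> V0" for w
      by (rule quadB[of "K w + M"]) (use quad[OF that, of v] E0 in simp)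
    have "\<omega> v w' = 0" for w'
    proof -
      obtain c where c: "c > 0" "c *\<^sub>R w' \<in> V0" using absorb[OF V0open V00] by blast
      have "zs * \<omega> v (c *\<^sub>R w') = 0" using Ldiff[of "c *\<^sub>R w'" v] L0[OF c(2)] L0[OF V00] by simp
      hence "c * \<omega> v w' = 0" using zs0 by (simp add: bilinear_rmul[OF bil])
      thus ?thesis using c(1) by simp
    qed
    hence "v = 0" by (rule nondeg)
    thus False using that by simp
  qed
  define Rb where "Rb = \<bar>zs*z0 + \<alpha> x0 + ts*t0\<bar> + 1 + \<bar>M\<bar> + a/2"
  have Lb: "\<bar>L w v\<bar> \<le> Rb" if "w \<in> V0" "\<omega> (D v) v \<le> 1" for w v
  proof -
    have q1: "0 \<le> (K w + M) + L w v * 1 + (a/2 * \<omega> (D v) v) * 1^2" by (rule quad[OF that(1)])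
    have q2: "0 \<le> (K w + M) + L w v * (-1) + (a/2 * \<omega> (D v) v) * (-1)^2" by (rule quad[OF that(1)])
    have aw: "\<bar>\<alpha> w\<bar> < 1" using that(1) unfolding V0_def by blast
    have "a/2 * \<omega> (D v) v \<le> a/2" using that(2) pos unfolding a_def by (simp add: mult_left_le)
    thus ?thesis using q1 q2 aw unfolding K_def Rb_def by (simp add: abs_le_iff) linarith
  qed
  define Bd where "Bd = 2 * Rb / \<bar>zs\<bar>"
  have bnd: "\<bar>\<omega> w v\<bar> \<le> Bd" if "w \<in> V0" "\<omega> (D v) v \<le> 1" for w v
  proof -
    have "\<bar>zs * \<omega> v w\<bar> \<le> 2 * Rb" using Ldiff[of w v] Lb[OF that] Lb[OF V00 that(2)] by linarith
    hence "\<bar>zs\<bar> * \<bar>\<omega> w v\<bar> \<le> 2 * Rb" using anti[of w v] by (simp add: abs_mult)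
    thus ?thesis unfolding Bd_def using zs0 by (simp add: field_simps)
  qed
  have bnd_all: "\<exists>B. \<forall>v. \<omega> (D v) v \<le> 1 \<longrightarrow> \<bar>\<omega> x v\<bar> \<le> B" for x
  proof -
    obtain c where c: "c > 0" "c *\<^sub>R x \<in> V0" using absorb[OF V0open V00] by blast
    have "\<bar>\<omega> x v\<bar> \<le> Bd / c" if "\<omega> (D v) v \<le> 1" for v
    proof -
      have "\<bar>c * \<omega> x v\<bar> \<le> Bd" using bnd[OF c(2) that] by (simp add: bilinear_lmul[OF bil])
      thus ?thesis using c(1) by (simp add: field_simps abs_mult)
    qed
    thus ?thesis by blast
  qed
  have Qzero: "\<omega> (D 0) 0 \<le> 1" by (simp add: bilinear_rzero[OF bil])
  have c1: "bilinear (\<lambda>v w. \<omega> (generator \<gamma> v) w)"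
    unfolding bilinear_def
  proof (intro conjI allI)
    fix x show "linear (\<lambda>y. \<omega> (D x) y)" using bil by (simp add: bilinear_def)
  next
    fix y have "linear ((\<lambda>x. \<omega> x y) \<circ> D)" by (rule linear_compose[OF D_linear]) (use bil in \<open>simp add: bilinear_def\<close>)
    thus "linear (\<lambda>x. \<omega> (D x) y)" by (simp add: o_def)
  qed
  have c5: "Q_continuous (\<lambda>v w. \<omega> (generator \<gamma> v) w) (\<omega> x)" for x
  proof -
    obtain B where "\<forall>v. \<omega> (D v) v \<le> 1 \<longrightarrow> \<bar>\<omega> x v\<bar> \<le> B" using bnd_all by blast
    thus ?thesis by (intro qn_bound(1)[of _ _ B]) (auto simp: Qzero bilinear_rzero[OF bil])
  qed
  have c4: "Q_continuous (\<lambda>v w. \<omega> (generator \<gamma> v) w) (\<alpha> \<circ> generator \<gamma>)"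
  proof -
    obtain B where B: "\<forall>v. \<omega> (D v) v \<le> 1 \<longrightarrow> \<bar>\<omega> x0 v\<bar> \<le> B" using bnd_all by blast
    have "\<bar>\<alpha> (D v)\<bar> \<le> (\<bar>zs\<bar> * B + Rb) / \<bar>t0\<bar>" if "\<omega> (D v) v \<le> 1" for v
    proof -
      have e: "t0 * \<alpha> (D v) = zs * \<omega> v x0 - L 0 v" unfolding L_def by simp
      have b1: "\<bar>\<omega> v x0\<bar> \<le> B" using B that anti[of v x0] by simp
      have b2: "\<bar>L 0 v\<bar> \<le> Rb" by (rule Lb[OF V00 that])
      have "\<bar>t0 * \<alpha> (D v)\<bar> \<le> \<bar>zs * \<omega> v x0\<bar> + \<bar>L 0 v\<bar>" unfolding e by (rule abs_triangle_ineq4)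
      moreover have "\<bar>zs * \<omega> v x0\<bar> \<le> \<bar>zs\<bar> * B" unfolding abs_mult by (rule mult_left_mono[OF b1 abs_ge_zero])
      ultimately have "\<bar>t0\<bar> * \<bar>\<alpha> (D v)\<bar> \<le> \<bar>zs\<bar> * B + Rb" using b2 by (simp add: abs_mult)
      thus ?thesis using t00 by (simp add: field_simps)
    qed
    thus ?thesis by (intro qn_bound(1)[of _ _ "(\<bar>zs\<bar> * B + Rb) / \<bar>t0\<bar>"])
       (auto simp: Qzero D_neg linear_0[OF la] linear_0[OF D_linear] intro: abs_le_D1)
  qed
  have c6: "\<exists>U. open U \<and> 0 \<in> U \<and>
           (\<exists>C. \<forall>x\<in>U. \<bar>Q_norm (\<lambda>v w. \<omega> (generator \<gamma> v) w) (\<omega> x)\<bar> \<le> ereal C)"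
  proof (intro exI conjI ballI)
    show "open V0" "0 \<in> V0" by (fact V0open, fact V00)
    fix x assume "x \<in> V0"
    thus "\<bar>Q_norm (\<lambda>v w. \<omega> (generator \<gamma> v) w) (\<omega> x)\<bar> \<le> ereal Bd"
      using bnd by (intro qn_bound(2)) (auto simp: Qzero bilinear_rzero[OF bil] abs_le_iff)
  qed
  show ?thesis using c1 D_sym strict c4 c5 c6 by blast
qed

end
theorem lemma2p6:
  fixes \<omega> :: "'v::{real_vector,topological_space} \<Rightarrow> 'v \<Rightarrow> real"
    and \<gamma> :: "real \<Rightarrow> 'v \<Rightarrow> 'v"
    and zs ts :: real and \<alpha> :: "'v \<Rightarrow> real"
  assumes "locally_convex_space TYPE('v)"
    and "symplectic_form \<omega>"
    and "smooth_sp_action \<omega> \<gamma>"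
    and "linear \<alpha>" and "continuous_on UNIV \<alpha>"
    and "semi_equicontinuous (coadjoint_orbit \<omega> \<gamma> (lform zs \<alpha> ts))"
    and "\<exists>z x t. (z, x, t) \<in> interior (Bset (coadjoint_orbit \<omega> \<gamma> (lform zs \<alpha> ts))) \<and> zs * t > 0"
  shows "bilinear (\<lambda>v w. \<omega> (generator \<gamma> v) w)
         \<and> (\<forall>v w. \<omega> (generator \<gamma> v) w = \<omega> (generator \<gamma> w) v)
         \<and> (\<forall>v. v \<noteq> 0 \<longrightarrow> \<omega> (generator \<gamma> v) v > 0)
         \<and> Q_continuous (\<lambda>v w. \<omega> (generator \<gamma> v) w) (\<alpha> \<circ> generator \<gamma>)
         \<and> (\<forall>x. Q_continuous (\<lambda>v w. \<omega> (generator \<gamma> v) w) (\<omega> x))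
         \<and> (\<exists>U. open U \<and> 0 \<in> U \<and>
           (\<exists>C. \<forall>x\<in>U. \<bar>Q_norm (\<lambda>v w. \<omega> (generator \<gamma> v) w) (\<omega> x)\<bar> \<le> ereal C))"
proof -
  interpret osc \<omega> \<gamma> using assms(1-3) by unfold_locales
  from assms(7) obtain z x t where h: "(z, x, t) \<in> interior (Bset (coadjoint_orbit \<omega> \<gamma> (lform zs \<alpha> ts)))"
    and p: "zs * t > 0" by blast
  show ?thesis by (rule main[OF assms(4) assms(5) assms(6) h p])
qed

end
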